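(* Let $\mathcal{L}_1,\mathcal{L}_2$ be objects of $\mathbf{Cal^0_{Sym}}$. Then $\mathcal{L}_1\circledast\mathcal{L}_2$ is a simple closure space on $\Sigma_1\times\Sigma_2$ (in particular a complete atomistic lattice whose atoms are the singletons), $\mathcal{L}_1\circledast\mathcal{L}_2$ is an object of $\mathbf{Cal^0_{Sym}}$, and the set of coatoms of $\mathcal{L}_1\circledast\mathcal{L}_2$ is exactly $\Sigma'_\circledast$.
   Context: A simple closure space on a nonempty set $\Sigma$ is a family $\mathcal{L}\subseteq 2^\Sigma$ containing $\emptyset$, $\Sigma$ and all singletons and closed under arbitrary intersections (ordered by inclusion). For a complete lattice $\mathcal{L}_i$: $\Sigma_i,\Sigma_i'$ are its sets of atoms and coatoms, $\Sigma[a]$ (resp. $\Sigma'[a]$) the atoms below (resp. coatoms above) $a$, and $\mathsf{Cl}(\omega)=\{\Sigma[a]\,;\,a\in\omega\}$. $\mathbf{Cal^0_{Sym}}$: objects are complete atomistic coatomistic lattices with $\Sigma[x]\cup\Sigma[y]\ne\Sigma$ for all coatoms $x,y$ and $\Sigma'[p]\cup\Sigma'[q]\ne\Sigma'$ for all atoms $p,q$. For $R\subseteq\Sigma_1\times\Sigma_2$, $p=(p_1,p_2)$: $R_1[p]:=\{q_1;(q_1,p_2)\in R\}$, $R_2[p]:=\{q_2;(p_1,q_2)\in R\}$. $\Sigma'_\circledast:=\{R\subsetneqq\Sigma_1\times\Sigma_2\,;\,R_1[p]\in\mathsf{Cl}(\Sigma_1'\cup\{1\}),\ R_2[p]\in\mathsf{Cl}(\Sigma_2'\cup\{1\})\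 \forall p\}$, and $\mathcal{L}_1\circledast\mathcal{L}_2:=\{\bigcap\omega\,;\,\omega\subseteq\Sigma'_\circledast\cup\{\Sigma_1\times\Sigma_2\}\}$ ordered by inclusion. *)

theory Defs
  imports Main
begin

definition is_poset :: "'a set \<Rightarrow> ('a \<Rightarrow> 'a \<Rightarrow> bool) \<Rightarrow> bool" where
  "is_poset A le \<longleftrightarrow> (\<forall>x\<in>A. le x x) \<and>
     (\<forall>x\<in>A. \<forall>y\<in>A. le x y \<and> le y x \<longrightarrow> x = y) \<and>
     (\<forall>x\<in>A. \<forall>y\<in>A. \<forall>z\<in>A. le x y \<and> le y z \<longrightarrow> le x z)"

definition is_lub :: "'a set \<Rightarrow> ('a \<Rightarrow> 'a \<Rightarrow> bool) \<Rightarrow> 'a set \<Rightarrow> 'a \<Rightarrow> bool" where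
  "is_lub A le S x \<longleftrightarrow> x \<in> A \<and> (\<forall>s\<in>S. le s x) \<and> (\<forall>y\<in>A. (\<forall>s\<in>S. le s y) \<longrightarrow> le x y)"

definition is_glb :: "'a set \<Rightarrow> ('a \<Rightarrow> 'a \<Rightarrow> bool) \<Rightarrow> 'a set \<Rightarrow> 'a \<Rightarrow> bool" where
  "is_glb A le S x \<longleftrightarrow> x \<in> A \<and> (\<forall>s\<in>S. le x s) \<and> (\<forall>y\<in>A. (\<forall>s\<in>S. le y s) \<longrightarrow> le y x)"

definition complete_lattice_on :: "'a set \<Rightarrow> ('a \<Rightarrow> 'a \<Rightarrow> bool) \<Rightarrow> bool" where
  "complete_lattice_on A le \<longleftrightarrow> is_poset A le \<and>
     (\<forall>S\<subseteq>A. \<exists>x. is_lub A le S x) \<and> (\<forall>S\<subseteq>A. \<exists>x. is_glb A le S x)"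

definition bot_on :: "'a set \<Rightarrow> ('a \<Rightarrow> 'a \<Rightarrow> bool) \<Rightarrow> 'a" where
  "bot_on A le = (THE b. b \<in> A \<and> (\<forall>x\<in>A. le b x))"

definition top_on :: "'a set \<Rightarrow> ('a \<Rightarrow> 'a \<Rightarrow> bool) \<Rightarrow> 'a" where
  "top_on A le = (THE t. t \<in> A \<and> (\<forall>x\<in>A. le x t))"

definition atoms_on :: "'a set \<Rightarrow> ('a \<Rightarrow> 'a \<Rightarrow> bool) \<Rightarrow> 'a set" where
  "atoms_on A le = {a \<in> A. a \<noteq> bot_on A le \<and> (\<forall>x\<in>A. le x a \<longrightarrow> x = bot_on A le \<or> x = a)}"

definition coatoms_on :: "'a set \<Rightarrow> ('a \<Rightarrow> 'a \<Rightarrow> bool) \<Rightarrow> 'a set" where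
  "coatoms_on A le = {a \<in> A. a \<noteq> top_on A le \<and> (\<forall>x\<in>A. le a x \<longrightarrow> x = top_on A le \<or> x = a)}"

definition atoms_below :: "'a set \<Rightarrow> ('a \<Rightarrow> 'a \<Rightarrow> bool) \<Rightarrow> 'a \<Rightarrow> 'a set" where
  "atoms_below A le x = {p \<in> atoms_on A le. le p x}"

definition coatoms_above :: "'a set \<Rightarrow> ('a \<Rightarrow> 'a \<Rightarrow> bool) \<Rightarrow> 'a \<Rightarrow> 'a set" where
  "coatoms_above A le x = {c \<in> coatoms_on A le. le x c}"

definition atomistic_on :: "'a set \<Rightarrow> ('a \<Rightarrow> 'a \<Rightarrow> bool) \<Rightarrow> bool" where
  "atomistic_on A le \<longleftrightarrow> (\<forall>x\<in>A. is_lub A le (atoms_below A le x) x)"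

definition coatomistic_on :: "'a set \<Rightarrow> ('a \<Rightarrow> 'a \<Rightarrow> bool) \<Rightarrow> bool" where
  "coatomistic_on A le \<longleftrightarrow> (\<forall>x\<in>A. is_glb A le (coatoms_above A le x) x)"

definition Cal0Sym :: "'a set \<Rightarrow> ('a \<Rightarrow> 'a \<Rightarrow> bool) \<Rightarrow> bool" where
  "Cal0Sym A le \<longleftrightarrow> complete_lattice_on A le \<and> atomistic_on A le \<and> coatomistic_on A le \<and>
     (\<forall>x\<in>coatoms_on A le. \<forall>y\<in>coatoms_on A le.
        atoms_below A le x \<union> atoms_below A le y \<noteq> atoms_on A le) \<and>
     (\<forall>p\<in>atoms_on A le. \<forall>q\<in>atoms_on A le.
        coatoms_above A le p \<union> coatoms_above A le q \<noteq> coatoms_on A le)"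

definition Cl :: "'a set \<Rightarrow> ('a \<Rightarrow> 'a \<Rightarrow> bool) \<Rightarrow> 'a set \<Rightarrow> 'a set set" where
  "Cl A le \<omega> = atoms_below A le ` \<omega>"

text \<open>Simple closure space on \<open>\<Sigma>\<close> (nonempty); intersection of the empty family is \<open>\<Sigma>\<close>.\<close>
definition simple_closure_space :: "'a set \<Rightarrow> 'a set set \<Rightarrow> bool" where
  "simple_closure_space \<Sigma> L \<longleftrightarrow> \<Sigma> \<noteq> {} \<and> L \<subseteq> Pow \<Sigma> \<and> {} \<in> L \<and> \<Sigma> \<in> L \<and>
     (\<forall>p\<in>\<Sigma>. {p} \<in> L) \<and> (\<forall>\<omega>\<subseteq>L. \<Sigma> \<inter> \<Inter>\<omega> \<in> L)"

definition R1 :: "('a \<times> 'b) set \<Rightarrow> 'a \<times> 'b \<Rightarrow> 'a set" where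
  "R1 R p = {q1. (q1, snd p) \<in> R}"

definition R2 :: "('a \<times> 'b) set \<Rightarrow> 'a \<times> 'b \<Rightarrow> 'b set" where
  "R2 R p = {q2. (fst p, q2) \<in> R}"

definition coatoms_tensor ::
  "'a set \<Rightarrow> ('a \<Rightarrow> 'a \<Rightarrow> bool) \<Rightarrow> 'b set \<Rightarrow> ('b \<Rightarrow> 'b \<Rightarrow> bool) \<Rightarrow> ('a \<times> 'b) set set" where
  "coatoms_tensor L1 le1 L2 le2 =
     {R. R \<subset> atoms_on L1 le1 \<times> atoms_on L2 le2 \<and>
        (\<forall>p \<in> atoms_on L1 le1 \<times> atoms_on L2 le2.
           R1 R p \<in> Cl L1 le1 (coatoms_on L1 le1 \<union> {top_on L1 le1}) \<and>
           R2 R p \<in> Cl L2 le2 (coatoms_on L2 le2 \<union> {top_on L2 le2}))}"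

definition tensor ::
  "'a set \<Rightarrow> ('a \<Rightarrow> 'a \<Rightarrow> bool) \<Rightarrow> 'b set \<Rightarrow> ('b \<Rightarrow> 'b \<Rightarrow> bool) \<Rightarrow> ('a \<times> 'b) set set" where
  "tensor L1 le1 L2 le2 =
     {(atoms_on L1 le1 \<times> atoms_on L2 le2) \<inter> \<Inter>\<omega> | \<omega>.
        \<omega> \<subseteq> coatoms_tensor L1 le1 L2 le2 \<union> {atoms_on L1 le1 \<times> atoms_on L2 le2}}"

end

theory Submission
  imports Defs
begin


lemma antisymD: "is_poset L le \<Longrightarrow> x \<in> L \<Longrightarrow> y \<in> L \<Longrightarrow> le x y \<Longrightarrow> le y x \<Longrightarrow> x = y"
  unfolding is_poset_def by blast

lemma lub_least: "is_lub L le S x \<Longrightarrow> y \<in> L \<Longrightarrow> (\<And>s. s \<in> S \<Longrightarrow> le s y) \<Longrightarrow> le x y"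
  unfolding is_lub_def by blast

lemma glb_greatest: "is_glb L le S x \<Longrightarrow> y \<in> L \<Longrightarrow> (\<And>s. s \<in> S \<Longrightarrow> le y s) \<Longrightarrow> le y x"
  unfolding is_glb_def by blast

lemma coatomD:
  assumes "c \<in> coatoms_on L le"
  shows "c \<in> L" "c \<noteq> top_on L le" "\<And>x. x \<in> L \<Longrightarrow> le c x \<Longrightarrow> x = top_on L le \<or> x = c"
  using assms unfolding coatoms_on_def by auto

lemma atomD:
  assumes "c \<in> atoms_on L le"
  shows "c \<in> L" "c \<noteq> bot_on L le" "\<And>x. x \<in> L \<Longrightarrow> le x c \<Longrightarrow> x = bot_on L le \<or> x = c"
  using assms unfolding atoms_on_def by auto

lemma cal_parts:
  assumes "Cal0Sym L le"
  shows "complete_lattice_on L le" "atomistic_on L le" "coatomistic_on L le" "is_poset L le"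
  using assms unfolding Cal0Sym_def complete_lattice_on_def by auto

lemma top_props:
  assumes "complete_lattice_on L le"
  shows "top_on L le \<in> L \<and> (\<forall>x\<in>L. le x (top_on L le))"
proof -
  from assms obtain t where t: "is_lub L le L t" unfolding complete_lattice_on_def by blast
  have P: "is_poset L le" using assms unfolding complete_lattice_on_def by simp
  have tt: "t \<in> L \<and> (\<forall>x\<in>L. le x t)" using t unfolding is_lub_def by simp
  have "top_on L le = t" unfolding top_on_def
  proof (rule the_equality)
    show "t \<in> L \<and> (\<forall>x\<in>L. le x t)" by (fact tt)
    fix t' assume h: "t' \<in> L \<and> (\<forall>x\<in>L. le x t')"
    show "t' = t"
      by (rule antisymD[OF P]) (use h tt in auto)
  qed
  then show ?thesis using tt by simp
qed

lemma atoms_sub: "atoms_on L le \<subseteq> L" unfolding atoms_on_def by blast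

lemma coatoms_sub: "coatoms_on L le \<subseteq> L" unfolding coatoms_on_def by blast

lemma below_top:
  assumes "complete_lattice_on L le"
  shows "atoms_below L le (top_on L le) = atoms_on L le"
  using top_props[OF assms] atoms_sub[of L le] unfolding atoms_below_def by blast

lemma coatom_below_ne:
  assumes "Cal0Sym L le" "c \<in> coatoms_on L le"
  shows "atoms_below L le c \<noteq> atoms_on L le"
proof
  assume E: "atoms_below L le c = atoms_on L le"
  note CL = cal_parts(1)[OF assms(1)] and AT = cal_parts(2)[OF assms(1)]
    and P = cal_parts(4)[OF assms(1)]
  have T: "top_on L le \<in> L" "\<forall>x\<in>L. le x (top_on L le)" using top_props[OF CL] by auto
  have "is_lub L le (atoms_below L le (top_on L le)) (top_on L le)"
    using AT T(1) unfolding atomistic_on_def by simp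
  then have lub: "is_lub L le (atoms_on L le) (top_on L le)" using below_top[OF CL] by simp
  have cL: "c \<in> L" using coatomD(1)[OF assms(2)] .
  have "le (top_on L le) c"
  proof (rule lub_least[OF lub cL])
    fix s assume "s \<in> atoms_on L le"
    then have "s \<in> atoms_below L le c" using E by simp
    then show "le s c" unfolding atoms_below_def by simp
  qed
  moreover have "le c (top_on L le)" using T cL by blast
  ultimately have "c = top_on L le" using antisymD[OF P cL T(1)] by simp
  then show False using coatomD(2)[OF assms(2)] by simp
qed

abbreviation KK where "KK L le \<equiv> Cl L le (coatoms_on L le \<union> {top_on L le})"

lemma K_top: "complete_lattice_on L le \<Longrightarrow> atoms_on L le \<in> KK L le"
  unfolding Cl_def using below_top by (metis UnI2 image_eqI insertI1)

lemma K_coatom: "c \<in> coatoms_on L le \<Longrightarrow> atoms_below L le c \<in> KK L le"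
  unfolding Cl_def by blast

lemma K_sub: "X \<in> KK L le \<Longrightarrow> X \<subseteq> atoms_on L le"
  unfolding Cl_def atoms_below_def by blast

lemma K_cases:
  assumes "Cal0Sym L le" "X \<in> KK L le" "X \<noteq> atoms_on L le"
  obtains c where "c \<in> coatoms_on L le" "X = atoms_below L le c"
proof -
  note CL = cal_parts(1)[OF assms(1)]
  from assms(2) obtain z where z: "z \<in> coatoms_on L le \<union> {top_on L le}" "X = atoms_below L le z"
    unfolding Cl_def by blast
  have "z \<noteq> top_on L le" using z(2) assms(3) below_top[OF CL] by metis
  then have "z \<in> coatoms_on L le" using z(1) by simp
  then show ?thesis using z(2) that by simp
qed

lemma K_mono:
  assumes "Cal0Sym L le" "X \<in> KK L le" "Y \<in> KK L le" "X \<subseteq> Y" "Y \<noteq> atoms_on L le"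
  shows "X = Y"
proof -
  note AT = cal_parts(2)[OF assms(1)]
  obtain c' where c': "c' \<in> coatoms_on L le" "Y = atoms_below L le c'"
    using K_cases[OF assms(1,3,5)] by metis
  have "X \<noteq> atoms_on L le" using assms(4,5) K_sub[OF assms(3)] by blast
  then obtain c where c: "c \<in> coatoms_on L le" "X = atoms_below L le c"
    using K_cases[OF assms(1,2)] by metis
  have cL: "c \<in> L" "c' \<in> L" using coatomD(1)[OF c(1)] coatomD(1)[OF c'(1)] by auto
  have lub: "is_lub L le (atoms_below L le c) c" using AT cL unfolding atomistic_on_def by simp
  have "le c c'"
  proof (rule lub_least[OF lub cL(2)])
    fix s assume "s \<in> atoms_below L le c"
    then have "s \<in> atoms_below L le c'" using assms(4) c c' by blast
    then show "le s c'" unfolding atoms_below_def by simp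
  qed
  then have "c' = top_on L le \<or> c' = c" using coatomD(3)[OF c(1) cL(2)] by simp
  then have "c' = c" using coatomD(2)[OF c'(1)] by simp
  then show ?thesis using c c' by simp
qed

lemma sep_coatom:
  assumes "Cal0Sym L le" "p \<in> atoms_on L le" "q \<in> atoms_on L le" "p \<noteq> q"
  shows "\<exists>c\<in>coatoms_on L le. le p c \<and> \<not> le q c"
proof (rule ccontr)
  assume H: "\<not> ?thesis"
  note CO = cal_parts(3)[OF assms(1)]
  have pL: "p \<in> L" "q \<in> L" using atomD(1)[OF assms(2)] atomD(1)[OF assms(3)] by auto
  have glb: "is_glb L le (coatoms_above L le p) p" using CO pL unfolding coatomistic_on_def by simp
  have "le q p"
  proof (rule glb_greatest[OF glb pL(2)])
    fix s assume "s \<in> coatoms_above L le p"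
    then show "le q s" using H unfolding coatoms_above_def by blast
  qed
  then have "q = bot_on L le \<or> q = p" using atomD(3)[OF assms(2) pL(2)] by simp
  then show False using atomD(2)[OF assms(3)] assms(4) by simp
qed

lemma avoid_coatom:
  assumes "Cal0Sym L le" "p \<in> atoms_on L le" "q \<in> atoms_on L le"
  shows "\<exists>c\<in>coatoms_on L le. \<not> le p c \<and> \<not> le q c"
proof -
  have "coatoms_above L le p \<union> coatoms_above L le q \<noteq> coatoms_on L le"
    using assms unfolding Cal0Sym_def by simp
  then show ?thesis unfolding coatoms_above_def by blast
qed

lemma K_union:
  assumes "Cal0Sym L le" "X \<in> KK L le" "Y \<in> KK L le" "X \<noteq> atoms_on L le" "Y \<noteq> atoms_on L le"
  shows "\<exists>z\<in>atoms_on L le. z \<notin> X \<and> z \<notin> Y"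
proof -
  obtain c where c: "c \<in> coatoms_on L le" "X = atoms_below L le c"
    using K_cases[OF assms(1,2,4)] by metis
  obtain d where d: "d \<in> coatoms_on L le" "Y = atoms_below L le d"
    using K_cases[OF assms(1,3,5)] by metis
  have "atoms_below L le c \<union> atoms_below L le d \<noteq> atoms_on L le"
    using assms(1) c(1) d(1) unfolding Cal0Sym_def by simp
  then show ?thesis using c d unfolding atoms_below_def by blast
qed



lemma closure_lattice:
  assumes sub: "T \<subseteq> Pow S" and top: "S \<in> T" and inter: "\<forall>\<Omega>\<subseteq>T. S \<inter> \<Inter>\<Omega> \<in> T"
  shows "complete_lattice_on T (\<subseteq>)"
  unfolding complete_lattice_on_def
proof (intro conjI allI impI)
  show "is_poset T (\<subseteq>)" unfolding is_poset_def by blast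
next
  fix \<Omega> assume O: "\<Omega> \<subseteq> T"
  let ?x = "S \<inter> \<Inter>{Y\<in>T. \<Union>\<Omega> \<subseteq> Y}"
  have "?x \<in> T" using inter by (metis (no_types, lifting) mem_Collect_eq subsetI)
  moreover have "\<forall>s\<in>\<Omega>. s \<subseteq> ?x" using O sub by blast
  moreover have "\<forall>y\<in>T. (\<forall>s\<in>\<Omega>. s \<subseteq> y) \<longrightarrow> ?x \<subseteq> y" by blast
  ultimately show "\<exists>x. is_lub T (\<subseteq>) \<Omega> x" unfolding is_lub_def by blast
next
  fix \<Omega> assume O: "\<Omega> \<subseteq> T"
  let ?x = "S \<inter> \<Inter>\<Omega>"
  have "?x \<in> T" using inter O by blast
  moreover have "\<forall>s\<in>\<Omega>. ?x \<subseteq> s" by blast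
  moreover have "\<forall>y\<in>T. (\<forall>s\<in>\<Omega>. y \<subseteq> s) \<longrightarrow> y \<subseteq> ?x" using sub by blast
  ultimately show "\<exists>x. is_glb T (\<subseteq>) \<Omega> x" unfolding is_glb_def by blast
qed

lemma top_on_T: "T \<subseteq> Pow S \<Longrightarrow> S \<in> T \<Longrightarrow> top_on T (\<subseteq>) = S"
  unfolding top_on_def by (rule the_equality) auto

lemma bot_on_T: "{} \<in> T \<Longrightarrow> bot_on T (\<subseteq>) = {}"
  unfolding bot_on_def by (rule the_equality) auto

lemma atoms_T:
  assumes "T \<subseteq> Pow S" "{} \<in> T" "\<forall>p\<in>S. {p} \<in> T"
  shows "atoms_on T (\<subseteq>) = {{p} | p. p \<in> S}"
proof -
  have b: "bot_on T (\<subseteq>) = {}" using bot_on_T assms(2) by blast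
  show ?thesis
  proof (rule set_eqI, rule iffI)
    fix a assume "a \<in> atoms_on T (\<subseteq>)"
    then have a: "a \<in> T" "a \<noteq> {}" "\<forall>x\<in>T. x \<subseteq> a \<longrightarrow> x = {} \<or> x = a"
      unfolding atoms_on_def b by auto
    then obtain p where p: "p \<in> a" by blast
    then have "p \<in> S" using a assms(1) by blast
    then have "{p} = a" using a p assms(3) by blast
    then show "a \<in> {{p} | p. p \<in> S}" using \<open>p \<in> S\<close> by blast
  next
    fix a assume "a \<in> {{p} | p. p \<in> S}"
    then obtain p where "a = {p}" "p \<in> S" by blast
    then show "a \<in> atoms_on T (\<subseteq>)" unfolding atoms_on_def b using assms(3)
      by (auto simp: subset_singleton_iff)
  qed
qed

lemma atoms_below_T:
  assumes "T \<subseteq> Pow S" "{} \<in> T" "\<forall>p\<in>S. {p} \<in> T" "X \<in> T"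
  shows "atoms_below T (\<subseteq>) X = {{p} | p. p \<in> X}"
  unfolding atoms_below_def atoms_T[OF assms(1-3)] using assms(1,4) by blast

lemma atomistic_T:
  assumes "T \<subseteq> Pow S" "{} \<in> T" "\<forall>p\<in>S. {p} \<in> T"
  shows "atomistic_on T (\<subseteq>)"
  unfolding atomistic_on_def
proof
  fix X assume X: "X \<in> T"
  show "is_lub T (\<subseteq>) (atoms_below T (\<subseteq>) X) X"
    unfolding atoms_below_T[OF assms X] is_lub_def using X by blast
qed



locale two =
  fixes L1 :: "'a set" and le1 :: "'a \<Rightarrow> 'a \<Rightarrow> bool"
    and L2 :: "'b set" and le2 :: "'b \<Rightarrow> 'b \<Rightarrow> bool"
  assumes C1: "Cal0Sym L1 le1" and C2: "Cal0Sym L2 le2"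
begin

abbreviation "A1 \<equiv> atoms_on L1 le1"
abbreviation "A2 \<equiv> atoms_on L2 le2"
abbreviation "S \<equiv> A1 \<times> A2"
abbreviation "C \<equiv> coatoms_tensor L1 le1 L2 le2"
abbreviation "T \<equiv> tensor L1 le1 L2 le2"

lemma CL1: "complete_lattice_on L1 le1" using C1 Cal0Sym_def by blast
lemma CL2: "complete_lattice_on L2 le2" using C2 Cal0Sym_def by blast

lemma C_iff: "R \<in> C \<longleftrightarrow> R \<subseteq> S \<and> R \<noteq> S \<and>
   (\<forall>u\<in>A1. \<forall>v\<in>A2. {q. (q,v)\<in>R} \<in> KK L1 le1 \<and> {q. (u,q) \<in> R} \<in> KK L2 le2)"
  unfolding coatoms_tensor_def R1_def R2_def by auto

lemma T_iff: "X \<in> T \<longleftrightarrow> X \<subseteq> S \<and> (\<forall>p\<in>S. p \<notin> X \<longrightarrow> (\<exists>R\<in>C. X \<subseteq> R \<and> p \<notin> R))"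
proof
  assume "X \<in> T"
  then obtain \<omega> where w: "X = S \<inter> \<Inter>\<omega>" "\<omega> \<subseteq> C \<union> {S}" unfolding tensor_def by blast
  show "X \<subseteq> S \<and> (\<forall>p\<in>S. p \<notin> X \<longrightarrow> (\<exists>R\<in>C. X \<subseteq> R \<and> p \<notin> R))"
  proof (intro conjI ballI impI)
    show "X \<subseteq> S" using w by blast
    fix p assume p: "p \<in> S" "p \<notin> X"
    then obtain R where R: "R \<in> \<omega>" "p \<notin> R" using w by blast
    then have "R \<in> C" using w p by blast
    then show "\<exists>R\<in>C. X \<subseteq> R \<and> p \<notin> R" using R w by blast
  qed
next
  assume H: "X \<subseteq> S \<and> (\<forall>p\<in>S. p \<notin> X \<longrightarrow> (\<exists>R\<in>C. X \<subseteq> R \<and> p \<notin> R))"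
  have "X = S \<inter> \<Inter>{R\<in>C. X \<subseteq> R}" using H by blast
  moreover have "{R\<in>C. X \<subseteq> R} \<subseteq> C \<union> {S}" by blast
  ultimately show "X \<in> T" unfolding tensor_def by blast
qed

lemma CD:
  assumes "R \<in> C"
  shows "R \<subseteq> S" "R \<noteq> S"
    "\<And>u v. u \<in> A1 \<Longrightarrow> v \<in> A2 \<Longrightarrow> {q. (q,v)\<in>R} \<in> KK L1 le1"
    "\<And>u v. u \<in> A1 \<Longrightarrow> v \<in> A2 \<Longrightarrow> {q. (u,q)\<in>R} \<in> KK L2 le2"
  using assms unfolding C_iff by auto

lemma full_row:
  assumes R: "R \<in> C" and R': "R' \<in> C" and sub: "R \<subseteq> R'" and ab: "(a,b) \<in> R'" "(a,b) \<notin> R"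
  shows "{q. (a,q) \<in> R'} = A2"
proof (rule ccontr)
  assume N: "{q. (a,q) \<in> R'} \<noteq> A2"
  have abS: "(a,b) \<in> S" using CD(1)[OF R'] ab(1) by blast
  then have ab1: "a \<in> A1" "b \<in> A2" by auto
  have K: "{q. (a,q) \<in> R} \<in> KK L2 le2" "{q. (a,q) \<in> R'} \<in> KK L2 le2"
    using CD(4)[OF R ab1] CD(4)[OF R' ab1] by auto
  have "{q. (a,q) \<in> R} \<subseteq> {q. (a,q) \<in> R'}" using sub by blast
  then have "{q. (a,q) \<in> R} = {q. (a,q) \<in> R'}"
    using K_mono[OF C2 K(1) K(2) _ N] by simp
  then show False using ab by blast
qed

lemma full_col:
  assumes R: "R \<in> C" and R': "R' \<in> C" and sub: "R \<subseteq> R'" and ab: "(a,b) \<in> R'" "(a,b) \<notin> R"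
  shows "{q. (q,b) \<in> R'} = A1"
proof (rule ccontr)
  assume N: "{q. (q,b) \<in> R'} \<noteq> A1"
  have abS: "(a,b) \<in> S" using CD(1)[OF R'] ab(1) by blast
  then have ab1: "a \<in> A1" "b \<in> A2" by auto
  have K: "{q. (q,b) \<in> R} \<in> KK L1 le1" "{q. (q,b) \<in> R'} \<in> KK L1 le1"
    using CD(3)[OF R ab1] CD(3)[OF R' ab1] by auto
  have "{q. (q,b) \<in> R} \<subseteq> {q. (q,b) \<in> R'}" using sub by blast
  then have "{q. (q,b) \<in> R} = {q. (q,b) \<in> R'}"
    using K_mono[OF C1 K(1) K(2) _ N] by simp
  then show False using ab by blast
qed

lemma outside:
  assumes "R \<in> C"
  obtains x y where "x \<in> A1" "y \<in> A2" "(x,y) \<notin> R"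
  using CD(1,2)[OF assms] by blast

lemma keyA:
  assumes R: "R \<in> C" and R': "R' \<in> C" and sub: "R \<subseteq> R'"
  shows "R = R'"
proof (rule ccontr)
  assume "R \<noteq> R'"
  then have "R' - R \<noteq> {}" using sub by blast
  then obtain a b where ab: "(a,b) \<in> R'" "(a,b) \<notin> R" by auto
  have "(a,b) \<in> S" using CD(1)[OF R'] ab(1) by blast
  then have abS: "a \<in> A1" "b \<in> A2" by auto
  have rowa: "{q. (a,q) \<in> R'} = A2" using full_row[OF R R' sub ab] .
  obtain x y where xy: "x \<in> A1" "y \<in> A2" "(x,y) \<notin> R'" using outside[OF R'] by metis
  have KR: "{q. (x,q) \<in> R} \<in> KK L2 le2" "{q. (a,q) \<in> R} \<in> KK L2 le2"
    using CD(4)[OF R xy(1,2)] CD(4)[OF R abS] by auto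
  have KR': "{q. (x,q) \<in> R'} \<in> KK L2 le2" using CD(4)[OF R' xy(1,2)] .
  have nx': "{q. (x,q) \<in> R'} \<noteq> A2" using xy by blast
  have "{q. (x,q) \<in> R} \<subseteq> {q. (x,q) \<in> R'}" using sub by blast
  then have rx: "{q. (x,q) \<in> R} = {q. (x,q) \<in> R'}"
    using K_mono[OF C2 KR(1) KR' _ nx'] by simp
  have nx: "{q. (x,q) \<in> R} \<noteq> A2" using rx nx' by simp
  have na: "{q. (a,q) \<in> R} \<noteq> A2" using ab abS by blast
  obtain y0 where y0: "y0 \<in> A2" "y0 \<notin> {q. (a,q) \<in> R}" "y0 \<notin> {q. (x,q) \<in> R}"
    using K_union[OF C2 KR(2) KR(1) na nx] by blast
  have a1: "(a,y0) \<in> R'" using rowa y0(1) by blast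
  have a2: "(a,y0) \<notin> R" using y0(2) by simp
  have "{q. (q,y0) \<in> R'} = A1" using full_col[OF R R' sub a1 a2] .
  then have "(x,y0) \<in> R'" using xy(1) by blast
  then have "y0 \<in> {q. (x,q) \<in> R}" using rx by simp
  then show False using y0(3) by simp
qed

lemma keyB:
  assumes R: "R \<in> C" and R': "R' \<in> C"
  shows "\<exists>p\<in>S. p \<notin> R \<and> p \<notin> R'"
proof -
  obtain a b where ab: "a \<in> A1" "b \<in> A2" "(a,b) \<notin> R" using outside[OF R] by metis
  obtain x y where xy: "x \<in> A1" "y \<in> A2" "(x,y) \<notin> R'" using outside[OF R'] by metis
  have K: "{q. (a,q) \<in> R} \<in> KK L2 le2" "{q. (x,q) \<in> R'} \<in> KK L2 le2"
    using CD(4)[OF R ab(1,2)] CD(4)[OF R' xy(1,2)] by auto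
  have N: "{q. (a,q) \<in> R} \<noteq> A2" "{q. (x,q) \<in> R'} \<noteq> A2" using ab xy by blast+
  obtain y0 where y0: "y0 \<in> A2" "y0 \<notin> {q. (a,q) \<in> R}" "y0 \<notin> {q. (x,q) \<in> R'}"
    using K_union[OF C2 K N] by blast
  have K': "{q. (q,y0) \<in> R} \<in> KK L1 le1" "{q. (q,y0) \<in> R'} \<in> KK L1 le1"
    using CD(3)[OF R ab(1) y0(1)] CD(3)[OF R' ab(1) y0(1)] by auto
  have N': "{q. (q,y0) \<in> R} \<noteq> A1" "{q. (q,y0) \<in> R'} \<noteq> A1" using ab(1) xy(1) y0 by blast+
  obtain x0 where x0: "x0 \<in> A1" "x0 \<notin> {q. (q,y0) \<in> R}" "x0 \<notin> {q. (q,y0) \<in> R'}"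
    using K_union[OF C1 K' N'] by blast
  show ?thesis using x0 y0(1) by blast
qed

lemma keyC:
  assumes c1: "c1 \<in> coatoms_on L1 le1" and c2: "c2 \<in> coatoms_on L2 le2"
    and u: "u \<in> A1" "\<not> le1 u c1" and v: "v \<in> A2" "\<not> le2 v c2"
  shows "{(x,y) \<in> S. le1 x c1 \<or> le2 y c2} \<in> C"
  unfolding C_iff
proof (intro conjI ballI)
  let ?R = "{(x,y) \<in> S. le1 x c1 \<or> le2 y c2}"
  show "?R \<subseteq> S" by blast
  show "?R \<noteq> S" using u v by blast
  fix x y assume xy: "x \<in> A1" "y \<in> A2"
  have "{q. (q,y) \<in> ?R} = (if le2 y c2 then A1 else atoms_below L1 le1 c1)"
    using xy unfolding atoms_below_def by auto
  then show "{q. (q,y) \<in> ?R} \<in> KK L1 le1" using K_top[OF CL1] K_coatom[OF c1] by simp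
  have "{q. (x,q) \<in> ?R} = (if le1 x c1 then A2 else atoms_below L2 le2 c2)"
    using xy unfolding atoms_below_def by auto
  then show "{q. (x,q) \<in> ?R} \<in> KK L2 le2" using K_top[OF CL2] K_coatom[OF c2] by simp
qed

end



context two
begin

lemma T_sub: "X \<in> T \<Longrightarrow> X \<subseteq> S" unfolding T_iff by (elim conjE)

lemma T_sep:
  assumes "X \<in> T" "p \<in> S" "p \<notin> X" shows "\<exists>R\<in>C. X \<subseteq> R \<and> p \<notin> R"
proof -
  have "\<forall>p\<in>S. p \<notin> X \<longrightarrow> (\<exists>R\<in>C. X \<subseteq> R \<and> p \<notin> R)"
    using assms(1) unfolding T_iff by (elim conjE)
  from bspec[OF this assms(2)] assms(3) show ?thesis by (rule mp)
qed

lemma T_intro: "X \<subseteq> S \<Longrightarrow> (\<And>p. p \<in> S \<Longrightarrow> p \<notin> X \<Longrightarrow> \<exists>R\<in>C. X \<subseteq> R \<and> p \<notin> R) \<Longrightarrow> X \<in> T"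
  unfolding T_iff by (intro conjI ballI impI)

lemma ex_helper: "R \<in> C \<Longrightarrow> X \<subseteq> R \<Longrightarrow> p \<notin> R \<Longrightarrow> \<exists>R\<in>C. X \<subseteq> R \<and> p \<notin> R"
  by blast

lemma C_T: "R \<in> C \<Longrightarrow> R \<in> T"
  by (rule T_intro) (use CD(1) in auto)

lemma S_T: "S \<in> T" by (rule T_intro) auto

lemma empty_T: "{} \<in> T"
proof (rule T_intro)
  fix p assume p: "p \<in> S"
  obtain p1 p2 where pp: "p = (p1,p2)" "p1 \<in> A1" "p2 \<in> A2" using p by auto
  obtain c1 where c1: "c1 \<in> coatoms_on L1 le1" "\<not> le1 p1 c1" using avoid_coatom[OF C1 pp(2) pp(2)] by blast
  obtain c2 where c2: "c2 \<in> coatoms_on L2 le2" "\<not> le2 p2 c2" using avoid_coatom[OF C2 pp(3) pp(3)] by blast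
  have h1: "{(x,y) \<in> S. le1 x c1 \<or> le2 y c2} \<in> C" using keyC[OF c1(1) c2(1) pp(2) c1(2) pp(3) c2(2)] .
  have h2: "p \<notin> {(x,y) \<in> S. le1 x c1 \<or> le2 y c2}" using pp c1 c2 by auto
  show "\<exists>R\<in>C. {} \<subseteq> R \<and> p \<notin> R" by (rule ex_helper[OF h1 _ h2]) simp
qed auto

lemma single_T:
  assumes p: "p \<in> S" shows "{p} \<in> T"
proof (rule T_intro)
  show "{p} \<subseteq> S" using p by simp
  fix q assume q: "q \<in> S" "q \<notin> {p}"
  obtain p1 p2 where pp: "p = (p1,p2)" "p1 \<in> A1" "p2 \<in> A2" using p by auto
  obtain q1 q2 where qq: "q = (q1,q2)" "q1 \<in> A1" "q2 \<in> A2" using q by auto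
  show "\<exists>R\<in>C. {p} \<subseteq> R \<and> q \<notin> R"
  proof (cases "p1 = q1")
    case False
    obtain c1 where c1: "c1 \<in> coatoms_on L1 le1" "le1 p1 c1" "\<not> le1 q1 c1"
      using sep_coatom[OF C1 pp(2) qq(2) False] by blast
    obtain c2 where c2: "c2 \<in> coatoms_on L2 le2" "\<not> le2 q2 c2" using avoid_coatom[OF C2 qq(3) qq(3)] by blast
    have h1: "{(x,y) \<in> S. le1 x c1 \<or> le2 y c2} \<in> C" using keyC[OF c1(1) c2(1) qq(2) c1(3) qq(3) c2(2)] .
    have h2: "q \<notin> {(x,y) \<in> S. le1 x c1 \<or> le2 y c2}" using qq c1 c2 by auto
    have h3: "p \<in> {(x,y) \<in> S. le1 x c1 \<or> le2 y c2}" using pp c1 by auto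
    show ?thesis by (rule ex_helper[OF h1 _ h2]) (use h3 in simp)
  next
    case True
    then have ne: "p2 \<noteq> q2" using pp qq q by auto
    obtain c2 where c2: "c2 \<in> coatoms_on L2 le2" "le2 p2 c2" "\<not> le2 q2 c2"
      using sep_coatom[OF C2 pp(3) qq(3) ne] by blast
    obtain c1 where c1: "c1 \<in> coatoms_on L1 le1" "\<not> le1 q1 c1" using avoid_coatom[OF C1 qq(2) qq(2)] by blast
    have h1: "{(x,y) \<in> S. le1 x c1 \<or> le2 y c2} \<in> C" using keyC[OF c1(1) c2(1) qq(2) c1(2) qq(3) c2(3)] .
    have h2: "q \<notin> {(x,y) \<in> S. le1 x c1 \<or> le2 y c2}" using qq c1 c2 by auto
    have h3: "p \<in> {(x,y) \<in> S. le1 x c1 \<or> le2 y c2}" using pp c2 by auto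
    show ?thesis by (rule ex_helper[OF h1 _ h2]) (use h3 in simp)
  qed
qed

lemma inter_T:
  assumes O: "\<Omega> \<subseteq> T" shows "S \<inter> \<Inter>\<Omega> \<in> T"
proof (rule T_intro)
  show "S \<inter> \<Inter>\<Omega> \<subseteq> S" by blast
  fix p assume p: "p \<in> S" "p \<notin> S \<inter> \<Inter>\<Omega>"
  then obtain X where X: "X \<in> \<Omega>" "p \<notin> X" by blast
  then obtain R where "R \<in> C" "X \<subseteq> R" "p \<notin> R" using T_sep[of X p] O p(1) by blast
  then show "\<exists>R\<in>C. S \<inter> \<Inter>\<Omega> \<subseteq> R \<and> p \<notin> R" using X(1) by blast
qed

lemma T_Pow: "T \<subseteq> Pow S" using T_sub by blast

lemma top_T: "top_on T (\<subseteq>) = S" using top_on_T[OF T_Pow S_T] .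

lemma coatoms_T: "coatoms_on T (\<subseteq>) = C"
proof (rule set_eqI, rule iffI)
  fix X assume X: "X \<in> coatoms_on T (\<subseteq>)"
  have XT: "X \<in> T" and XS: "X \<noteq> S" using coatomD(1,2)[OF X] top_T by auto
  then obtain p where p: "p \<in> S" "p \<notin> X" using T_sub by blast
  then obtain R where R: "R \<in> C" "X \<subseteq> R" "p \<notin> R" using T_sep[OF XT] by blast
  have "R = top_on T (\<subseteq>) \<or> R = X" using coatomD(3)[OF X C_T[OF R(1)] R(2)] .
  then have "R = X" using top_T R(3) p(1) by auto
  then show "X \<in> C" using R(1) by simp
next
  fix R assume R: "R \<in> C"
  have "\<forall>X\<in>T. R \<subseteq> X \<longrightarrow> X = S \<or> X = R"
  proof (intro ballI impI)
    fix X assume X: "X \<in> T" "R \<subseteq> X"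
    show "X = S \<or> X = R"
    proof (cases "X = S")
      case False
      then obtain p where p: "p \<in> S" "p \<notin> X" using T_sub[OF X(1)] by blast
      then obtain R' where R': "R' \<in> C" "X \<subseteq> R'" "p \<notin> R'" using T_sep[OF X(1)] by blast
      have "R = R'" using keyA[OF R R'(1)] X(2) R'(2) by blast
      then show ?thesis using X(2) R'(2) by blast
    qed simp
  qed
  then show "R \<in> coatoms_on T (\<subseteq>)" unfolding coatoms_on_def top_T
    using C_T[OF R] CD(2)[OF R] by simp
qed

lemma coatoms_above_T: "coatoms_above T (\<subseteq>) X = {R\<in>C. X \<subseteq> R}"
  unfolding coatoms_above_def coatoms_T by simp

lemma coatomistic_T: "coatomistic_on T (\<subseteq>)"
  unfolding coatomistic_on_def
proof
  fix X assume X: "X \<in> T"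
  have "\<forall>Y\<in>T. (\<forall>s\<in>{R\<in>C. X \<subseteq> R}. Y \<subseteq> s) \<longrightarrow> Y \<subseteq> X"
  proof (intro ballI impI subsetI)
    fix Y y assume Y: "Y \<in> T" "\<forall>s\<in>{R\<in>C. X \<subseteq> R}. Y \<subseteq> s" and y: "y \<in> Y"
    show "y \<in> X"
    proof (rule ccontr)
      assume "y \<notin> X"
      moreover have "y \<in> S" using T_sub[OF Y(1)] y by blast
      ultimately obtain R where "R \<in> C" "X \<subseteq> R" "y \<notin> R" using T_sep[OF X] by blast
      then show False using Y(2) y by blast
    qed
  qed
  then show "is_glb T (\<subseteq>) (coatoms_above T (\<subseteq>) X) X"
    unfolding is_glb_def coatoms_above_T using X by simp
qed

end



context two
begin

lemma avoid2:
  assumes p: "p \<in> S" and q: "q \<in> S"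
  shows "\<exists>R\<in>C. p \<notin> R \<and> q \<notin> R"
proof -
  obtain p1 p2 where pp: "p = (p1,p2)" "p1 \<in> A1" "p2 \<in> A2" using p by auto
  obtain q1 q2 where qq: "q = (q1,q2)" "q1 \<in> A1" "q2 \<in> A2" using q by auto
  obtain c1 where c1: "c1 \<in> coatoms_on L1 le1" "\<not> le1 p1 c1" "\<not> le1 q1 c1"
    using avoid_coatom[OF C1 pp(2) qq(2)] by blast
  obtain c2 where c2: "c2 \<in> coatoms_on L2 le2" "\<not> le2 p2 c2" "\<not> le2 q2 c2"
    using avoid_coatom[OF C2 pp(3) qq(3)] by blast
  have h1: "{(x,y) \<in> S. le1 x c1 \<or> le2 y c2} \<in> C" using keyC[OF c1(1) c2(1) pp(2) c1(2) pp(3) c2(2)] .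
  have h2: "p \<notin> {(x,y) \<in> S. le1 x c1 \<or> le2 y c2}" using pp c1 c2 by auto
  have h3: "q \<notin> {(x,y) \<in> S. le1 x c1 \<or> le2 y c2}" using qq c1 c2 by auto
  show ?thesis by (rule bexI[OF _ h1]) (use h2 h3 in simp)
qed

lemma single_all: "\<forall>p\<in>S. {p} \<in> T" using single_T by blast

lemma atomsT: "atoms_on T (\<subseteq>) = {{p} | p. p \<in> S}"
  using atoms_T[OF T_Pow empty_T single_all] .

lemma abT: "X \<in> T \<Longrightarrow> atoms_below T (\<subseteq>) X = {{p} | p. p \<in> X}"
  using atoms_below_T[OF T_Pow empty_T single_all] .

lemma CLT: "complete_lattice_on T (\<subseteq>)"
  using closure_lattice[OF T_Pow S_T] inter_T by blast

lemma ATT: "atomistic_on T (\<subseteq>)"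
  using atomistic_T[OF T_Pow empty_T single_all] .

lemma sym1: "\<forall>x\<in>coatoms_on T (\<subseteq>). \<forall>y\<in>coatoms_on T (\<subseteq>).
        atoms_below T (\<subseteq>) x \<union> atoms_below T (\<subseteq>) y \<noteq> atoms_on T (\<subseteq>)"
proof (intro ballI)
  fix x y assume x: "x \<in> coatoms_on T (\<subseteq>)" and y: "y \<in> coatoms_on T (\<subseteq>)"
  have xC: "x \<in> C" and yC: "y \<in> C" using x y coatoms_T by auto
  obtain p where p: "p \<in> S" "p \<notin> x" "p \<notin> y" using keyB[OF xC yC] by blast
  have "{p} \<in> atoms_on T (\<subseteq>)" using atomsT p(1) by blast
  moreover have "{p} \<notin> atoms_below T (\<subseteq>) x" using abT[OF C_T[OF xC]] p(2) by auto
  moreover have "{p} \<notin> atoms_below T (\<subseteq>) y" using abT[OF C_T[OF yC]] p(3) by auto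
  ultimately show "atoms_below T (\<subseteq>) x \<union> atoms_below T (\<subseteq>) y \<noteq> atoms_on T (\<subseteq>)" by blast
qed

lemma sym2: "\<forall>p\<in>atoms_on T (\<subseteq>). \<forall>q\<in>atoms_on T (\<subseteq>).
        coatoms_above T (\<subseteq>) p \<union> coatoms_above T (\<subseteq>) q \<noteq> coatoms_on T (\<subseteq>)"
proof (intro ballI)
  fix p q assume p: "p \<in> atoms_on T (\<subseteq>)" and q: "q \<in> atoms_on T (\<subseteq>)"
  obtain p0 where p0: "p = {p0}" "p0 \<in> S" using p atomsT by auto
  obtain q0 where q0: "q = {q0}" "q0 \<in> S" using q atomsT by auto
  obtain R where R: "R \<in> C" "p0 \<notin> R" "q0 \<notin> R" using avoid2[OF p0(2) q0(2)] by blast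
  have "R \<in> coatoms_on T (\<subseteq>)" using R(1) coatoms_T by simp
  moreover have "R \<notin> coatoms_above T (\<subseteq>) p" using R(2) p0(1) coatoms_above_T by simp
  moreover have "R \<notin> coatoms_above T (\<subseteq>) q" using R(3) q0(1) coatoms_above_T by simp
  ultimately show "coatoms_above T (\<subseteq>) p \<union> coatoms_above T (\<subseteq>) q \<noteq> coatoms_on T (\<subseteq>)" by blast
qed

lemma SCS:
  assumes "A1 \<noteq> {}" "A2 \<noteq> {}"
  shows "simple_closure_space S T"
  unfolding simple_closure_space_def
proof (intro conjI)
  show "S \<noteq> {}" using assms by simp
qed (use T_Pow empty_T S_T single_all inter_T in auto)

lemma CalT: "Cal0Sym T (\<subseteq>)"
  unfolding Cal0Sym_def using CLT ATT coatomistic_T sym1 sym2 by simp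

end

theorem lemma4p3:
  fixes L1 :: "'a set" and le1 :: "'a \<Rightarrow> 'a \<Rightarrow> bool"
    and L2 :: "'b set" and le2 :: "'b \<Rightarrow> 'b \<Rightarrow> bool"
  assumes "Cal0Sym L1 le1" and "Cal0Sym L2 le2"
    and "atoms_on L1 le1 \<noteq> {}" and "atoms_on L2 le2 \<noteq> {}"
  shows "simple_closure_space (atoms_on L1 le1 \<times> atoms_on L2 le2) (tensor L1 le1 L2 le2)
    \<and> complete_lattice_on (tensor L1 le1 L2 le2) (\<subseteq>)
    \<and> atomistic_on (tensor L1 le1 L2 le2) (\<subseteq>)
    \<and> atoms_on (tensor L1 le1 L2 le2) (\<subseteq>) = {{p} | p. p \<in> atoms_on L1 le1 \<times> atoms_on L2 le2}
    \<and> Cal0Sym (tensor L1 le1 L2 le2) (\<subseteq>)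
    \<and> coatoms_on (tensor L1 le1 L2 le2) (\<subseteq>) = coatoms_tensor L1 le1 L2 le2"
proof -
  interpret two L1 le1 L2 le2 using assms(1,2) by unfold_locales
  show ?thesis
    using SCS[OF assms(3,4)] CLT ATT atomsT CalT coatoms_T by blast
qed


end
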